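(* Fix an integer $k\ge1$. Let $G$ be the directed graph with vertices $v_{i,p}$ for $i\in\{1,2,3,\dots\}$ and $p\in\{1,\dots,k\}$, with an edge from $v_{i,p}$ to $v_{j,q}$ if and only if $j=i+1$ and $|p-q|\le1$, and with birthdates $t(v_{i,p})=i$. Then $(G,t)$ is an infinite biosphere, and $G$ has exactly $k$ distinct $\mathrm{IAP}\cap\mathrm{CONV}\cap\mathrm{CA}\cap\mathrm{REF}$-maximal sets, namely the sets $S_\ell=\{v_{1,\ell}\}\cup\{w: w \text{ is a descendant of } v_{1,\ell}\}$ for $\ell\in\{1,\dots,k\}$. Moreover $S_\ell\sim S_m$ for all $\ell,m\in\{1,\dots,k\}$.
   Context: An infinite biosphere is a directed graph $G$ together with a function $t$ assigning a real number $t(v)$ to each vertex, such that: (1) if $v$ is a parent of $w$ (edge from $v$ to $w$) then $t(v)<t(w)$; (2) for every $r\in\mathbb R$ at most finitely many vertices $v$ have $t(v)<r$; (3) every vertex has finitely many children; (4) $G$ is infinite. $v$ is an ancestor of $w$ (and $w$ a descendant of $v$) if there is a directed path $v=v_1,\dots,v_n=w$ with $n>1$. $\mathrm{IAP}$: sets $S$ of vertices such that no $v\in S$ has both infinitely many descendants in $S$ and infinitely many non-descendants in $S$. $\mathrm{CONV}$: sets $S$ such that every vertex having an ancestor in $S$ and a descendant in $S$ lies in $S$. $\mathrm{CA}$: sets $S$ for which there exists $v\in S$ such that every $w\in S$ with $w\neq v$ is a descendant of $v$. $\mathrm{REF}$: sets $S$ such that every $v\in S$ with infinitely many descendants in $G$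 has infinitely many descendants in $S$. An $\mathrm{IAP}\cap\mathrm{CONV}\cap\mathrm{CA}\cap\mathrm{REF}$-maximal set is a nonempty set in $\mathrm{IAP}\cap\mathrm{CONV}\cap\mathrm{CA}\cap\mathrm{REF}$ no proper superset of which lies in $\mathrm{IAP}\cap\mathrm{CONV}\cap\mathrm{CA}\cap\mathrm{REF}$. For $S\subseteq G$, a vertex $v\in S$ is a generator of $S$ if $S$ contains at most finitely many non-descendants of $v$; $\mathrm{gen}(S)$ is the set of generators. For infinite $S_1,S_2\subseteq G$, $S_1\sim S_2$ means the symmetric difference $\mathrm{gen}(S_1)\triangle\mathrm{gen}(S_2)$ is finite. *)

theory Defs
  imports Complex_Main
begin

text \<open>A directed graph is a vertex set V with an edge relation E (E v w: edge from v to w,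
  i.e. v is a parent of w). Birthdates t.\<close>

definition infinite_biosphere :: "'a set \<Rightarrow> ('a \<Rightarrow> 'a \<Rightarrow> bool) \<Rightarrow> ('a \<Rightarrow> real) \<Rightarrow> bool" where
  "infinite_biosphere V E t \<longleftrightarrow>
     (\<forall>v w. E v w \<longrightarrow> v \<in> V \<and> w \<in> V) \<and>
     (\<forall>v w. E v w \<longrightarrow> t v < t w) \<and>
     (\<forall>r::real. finite {v \<in> V. t v < r}) \<and>
     (\<forall>v \<in> V. finite {w. E v w}) \<and>
     infinite V"

definition desc :: "('a \<Rightarrow> 'a \<Rightarrow> bool) \<Rightarrow> 'a \<Rightarrow> 'a set" where
  "desc E v = {w. E\<^sup>+\<^sup>+ v w}"

definition IAP :: "('a \<Rightarrow> 'a \<Rightarrow> bool) \<Rightarrow> 'a set \<Rightarrow> bool" where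
  "IAP E S \<longleftrightarrow> (\<forall>v \<in> S. \<not> (infinite (S \<inter> desc E v) \<and> infinite (S - desc E v)))"

definition CONV :: "'a set \<Rightarrow> ('a \<Rightarrow> 'a \<Rightarrow> bool) \<Rightarrow> 'a set \<Rightarrow> bool" where
  "CONV V E S \<longleftrightarrow>
     (\<forall>u \<in> V. (\<exists>a \<in> S. u \<in> desc E a) \<and> (\<exists>d \<in> S. d \<in> desc E u) \<longrightarrow> u \<in> S)"

definition CA :: "('a \<Rightarrow> 'a \<Rightarrow> bool) \<Rightarrow> 'a set \<Rightarrow> bool" where
  "CA E S \<longleftrightarrow> (\<exists>v \<in> S. \<forall>w \<in> S. w \<noteq> v \<longrightarrow> w \<in> desc E v)"

definition REF :: "('a \<Rightarrow> 'a \<Rightarrow> bool) \<Rightarrow> 'a set \<Rightarrow> bool" where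
  "REF E S \<longleftrightarrow> (\<forall>v \<in> S. infinite (desc E v) \<longrightarrow> infinite (S \<inter> desc E v))"

definition good_set :: "'a set \<Rightarrow> ('a \<Rightarrow> 'a \<Rightarrow> bool) \<Rightarrow> 'a set \<Rightarrow> bool" where
  "good_set V E S \<longleftrightarrow> S \<subseteq> V \<and> IAP E S \<and> CONV V E S \<and> CA E S \<and> REF E S"

definition maximal_set :: "'a set \<Rightarrow> ('a \<Rightarrow> 'a \<Rightarrow> bool) \<Rightarrow> 'a set \<Rightarrow> bool" where
  "maximal_set V E S \<longleftrightarrow> S \<noteq> {} \<and> good_set V E S \<and>
     (\<forall>T. S \<subset> T \<and> T \<subseteq> V \<longrightarrow> \<not> good_set V E T)"

definition gen :: "('a \<Rightarrow> 'a \<Rightarrow> bool) \<Rightarrow> 'a set \<Rightarrow> 'a set" where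
  "gen E S = {v \<in> S. finite (S - desc E v)}"

definition sim :: "('a \<Rightarrow> 'a \<Rightarrow> bool) \<Rightarrow> 'a set \<Rightarrow> 'a set \<Rightarrow> bool" where
  "sim E S1 S2 \<longleftrightarrow> infinite S1 \<and> infinite S2 \<and>
     finite ((gen E S1 - gen E S2) \<union> (gen E S2 - gen E S1))"

definition strip_V :: "nat \<Rightarrow> (nat \<times> nat) set" where
  "strip_V k = {(i, p). 1 \<le> i \<and> 1 \<le> p \<and> p \<le> k}"

definition strip_E :: "nat \<Rightarrow> nat \<times> nat \<Rightarrow> nat \<times> nat \<Rightarrow> bool" where
  "strip_E k v w \<longleftrightarrow> v \<in> strip_V k \<and> w \<in> strip_V k \<and>
     fst w = fst v + 1 \<and> \<bar>int (snd v) - int (snd w)\<bar> \<le> 1"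

definition strip_t :: "nat \<times> nat \<Rightarrow> real" where
  "strip_t v = real (fst v)"

end

theory Submission
  imports Defs
begin

lemma desc_V:
  assumes "w \<in> desc (strip_E k) v"
  shows "w \<in> strip_V k \<and> v \<in> strip_V k \<and> fst v < fst w"
proof -
  have "(strip_E k)\<^sup>+\<^sup>+ v w" using assms by (simp add: desc_def)
  then show ?thesis
    by (induction rule: tranclp_induct) (auto simp: strip_E_def)
qed

lemma desc_trans:
  "w \<in> desc E v \<Longrightarrow> u \<in> desc E w \<Longrightarrow> u \<in> desc E v"
  by (auto simp: desc_def intro: tranclp_trans)

lemma reach:
  assumes "(i, p) \<in> strip_V k" "(i + Suc d, q) \<in> strip_V k"
    "\<bar>int q - int p\<bar> \<le> int (Suc d)"
  shows "(i + Suc d, q) \<in> desc (strip_E k) (i, p)"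
  using assms
proof (induction d arbitrary: i p)
  case 0
  then show ?case by (auto simp: desc_def strip_E_def)
next
  case (Suc d)
  define p' where "p' = (if p < q then p + 1 else if q < p then p - 1 else p)"
  have V1: "(Suc i, p') \<in> strip_V k"
    using Suc.prems by (auto simp: strip_V_def p'_def)
  have e: "strip_E k (i, p) (Suc i, p')"
    using Suc.prems V1 by (auto simp: strip_E_def p'_def)
  have "(Suc i + Suc d, q) \<in> desc (strip_E k) (Suc i, p')"
    apply (rule Suc.IH)
    using V1 Suc.prems by (auto simp: p'_def)
  moreover have "(Suc i, p') \<in> desc (strip_E k) (i, p)"
    using e by (simp add: desc_def)
  ultimately show ?case using desc_trans by fastforce
qed

lemma far:
  assumes "v \<in> strip_V k" "w \<in> strip_V k" "fst w \<ge> fst v + k"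
  shows "w \<in> desc (strip_E k) v"
proof -
  obtain i p where v: "v = (i, p)" by force
  obtain j q where w: "w = (j, q)" by force
  have "k \<ge> 1" using assms(1) by (auto simp: strip_V_def)
  then have "i < j" using assms v w by simp
  then obtain d where "j = Suc (i + d)" using less_iff_Suc_add by auto
  then have j: "j = i + Suc d" by simp
  have "\<bar>int q - int p\<bar> \<le> int (Suc d)"
    using assms v w j by (auto simp: strip_V_def)
  then show ?thesis using reach assms v w j by blast
qed

lemma finite_rows: "finite {w \<in> strip_V k. fst w < n}"
proof -
  have "{w \<in> strip_V k. fst w < n} \<subseteq> {..<n} \<times> {..k}"
    by (auto simp: strip_V_def)
  then show ?thesis by (rule finite_subset) auto
qed

definition C :: "nat \<Rightarrow> nat \<times> nat \<Rightarrow> (nat \<times> nat) set" where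
  "C k v = insert v (desc (strip_E k) v)"

lemma C_sub: "v \<in> strip_V k \<Longrightarrow> C k v \<subseteq> strip_V k"
  unfolding C_def using desc_V[of _ k v] by blast

lemma C_fin:
  assumes "v \<in> strip_V k" "u \<in> C k v"
  shows "finite (C k v - desc (strip_E k) u)"
proof -
  have uV: "u \<in> strip_V k" using assms C_sub by blast
  have "C k v - desc (strip_E k) u \<subseteq> {w \<in> strip_V k. fst w < fst u + k}"
  proof
    fix w assume w: "w \<in> C k v - desc (strip_E k) u"
    then have wV: "w \<in> strip_V k" using C_sub[OF assms(1)] by blast
    have "fst w < fst u + k"
    proof (rule ccontr)
      assume "\<not> fst w < fst u + k"
      then have "w \<in> desc (strip_E k) u" using far[OF uV wV] by simp
      then show False using w by blast
    qed
    then show "w \<in> {w \<in> strip_V k. fst w < fst u + k}" using wV by blast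
  qed
  then show ?thesis using finite_rows finite_subset by blast
qed

lemma desc_in_C:
  assumes "u \<in> C k v" shows "desc (strip_E k) u \<subseteq> C k v"
  using assms desc_trans[of u "strip_E k" v] unfolding C_def by blast

lemma good_C:
  assumes "v \<in> strip_V k" shows "good_set (strip_V k) (strip_E k) (C k v)"
  unfolding good_set_def
proof (intro conjI)
  show "C k v \<subseteq> strip_V k" using C_sub assms .
  show "IAP (strip_E k) (C k v)" using C_fin assms by (auto simp: IAP_def)
  show "CONV (strip_V k) (strip_E k) (C k v)"
    unfolding CONV_def
  proof (intro ballI impI)
    fix u assume "(\<exists>a \<in> C k v. u \<in> desc (strip_E k) a) \<and> (\<exists>d \<in> C k v. d \<in> desc (strip_E k) u)"
    then obtain a where "a \<in> C k v" "u \<in> desc (strip_E k) a" by blast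
    then show "u \<in> C k v" using desc_in_C[of a k v] by blast
  qed
  show "CA (strip_E k) (C k v)" by (auto simp: CA_def C_def)
  show "REF (strip_E k) (C k v)" unfolding REF_def
    using desc_in_C by (metis inf.absorb2)
qed

lemma good_root:
  assumes "good_set V E T" obtains r where "r \<in> T" "T \<subseteq> insert r (desc E r)"
  using assms by (auto simp: good_set_def CA_def)

lemma max_C:
  assumes "l \<in> {1..k}" shows "maximal_set (strip_V k) (strip_E k) (C k (1, l))"
proof -
  have V: "(1, l) \<in> strip_V k" using assms by (auto simp: strip_V_def)
  have "\<not> good_set (strip_V k) (strip_E k) T" if "C k (1, l) \<subset> T" "T \<subseteq> strip_V k" for T
  proof
    assume g: "good_set (strip_V k) (strip_E k) T"
    then obtain r where r: "r \<in> T" "T \<subseteq> insert r (desc (strip_E k) r)" by (rule good_root)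
    have "(1, l) \<in> T" using that by (auto simp: C_def)
    show False
    proof (cases "r = (1, l)")
      case True
      then show ?thesis using r that by (auto simp: C_def)
    next
      case False
      then have "(1, l) \<in> desc (strip_E k) r" using r \<open>(1, l) \<in> T\<close> by auto
      then show ?thesis using desc_V[of "(1,l)" k r] by (auto simp: strip_V_def)
    qed
  qed
  then show ?thesis unfolding maximal_set_def using good_C[OF V] by (auto simp: C_def)
qed

lemma max_is_C:
  assumes "maximal_set (strip_V k) (strip_E k) T"
  shows "\<exists>l \<in> {1..k}. T = C k (1, l)"
proof -
  have g: "good_set (strip_V k) (strip_E k) T" and mx: "\<And>T'. T \<subset> T' \<Longrightarrow> T' \<subseteq> strip_V k \<Longrightarrow> \<not> good_set (strip_V k) (strip_E k) T'"
    using assms by (auto simp: maximal_set_def)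
  obtain r where r: "r \<in> T" "T \<subseteq> insert r (desc (strip_E k) r)" using g by (rule good_root)
  have rV: "r \<in> strip_V k" using r g by (auto simp: good_set_def)
  have T: "T = C k r"
    using mx[of "C k r"] r good_C[OF rV] C_sub[OF rV] unfolding C_def by blast
  obtain i p where ip: "r = (i, p)" by force
  have "i = 1"
  proof (rule ccontr)
    assume "i \<noteq> 1"
    then have i: "i > 1" using rV ip by (auto simp: strip_V_def)
    define u where "u = (i - 1, p)"
    have uV: "u \<in> strip_V k" using rV ip i by (auto simp: strip_V_def u_def)
    have "strip_E k u r" using uV rV ip i by (auto simp: strip_E_def u_def)
    then have "r \<in> desc (strip_E k) u" by (auto simp: desc_def)
    moreover have "u \<notin> C k r" using desc_V[of u k r] i ip
      by (auto simp: C_def u_def)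
    ultimately have "C k r \<subset> C k u" using desc_in_C[of r k u]
      by (auto simp: C_def)
    then show False using mx[of "C k u"] T good_C[OF uV] C_sub[OF uV] by blast
  qed
  then show ?thesis using T ip rV by (auto simp: strip_V_def)
qed

lemma inf_C:
  assumes "v \<in> strip_V k" shows "infinite (C k v)"
proof
  assume f: "finite (C k v)"
  obtain i p where v: "v = (i,p)" by force
  have "(\<lambda>n. (n + i + k, p)) ` UNIV \<subseteq> C k v"
    using far[OF assms] assms v by (auto simp: C_def strip_V_def)
  moreover have "infinite ((\<lambda>n. (n + i + k, p)) ` (UNIV::nat set))"
    using finite_imageD[of "\<lambda>n. (n + i + k, p)" "UNIV::nat set"] by (auto simp: inj_on_def)
  ultimately show False using f finite_subset by blast
qed

lemma gen_C:
  assumes "v \<in> strip_V k" shows "gen (strip_E k) (C k v) = C k v"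
  using C_fin[OF assms] by (auto simp: gen_def)

theorem mainTheorem13:
  fixes k :: nat
  assumes "k \<ge> 1"
  defines "S \<equiv> (\<lambda>l::nat. insert (1, l) (desc (strip_E k) (1, l)))"
  shows "infinite_biosphere (strip_V k) (strip_E k) strip_t
    \<and> {T. maximal_set (strip_V k) (strip_E k) T} = S ` {1..k}
    \<and> card (S ` {1..k}) = k
    \<and> (\<forall>l \<in> {1..k}. \<forall>m \<in> {1..k}. sim (strip_E k) (S l) (S m))"
proof (intro conjI)
  have SC: "S l = C k (1, l)" for l by (simp add: S_def C_def)
  have VS: "l \<in> {1..k} \<Longrightarrow> (1, l) \<in> strip_V k" for l by (auto simp: strip_V_def)
  show "infinite_biosphere (strip_V k) (strip_E k) strip_t"
  proof -
    have h1: "\<forall>v w. strip_E k v w \<longrightarrow> v \<in> strip_V k \<and> w \<in> strip_V k"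
      by (auto simp: strip_E_def)
    have h2: "\<forall>v w. strip_E k v w \<longrightarrow> strip_t v < strip_t w"
      by (auto simp: strip_E_def strip_t_def)
    have h3: "finite {v \<in> strip_V k. strip_t v < r}" for r :: real
    proof -
      have "{v \<in> strip_V k. strip_t v < r} \<subseteq> {w \<in> strip_V k. fst w < nat \<lceil>r\<rceil>}"
        by (auto simp: strip_t_def) linarith
      then show ?thesis using finite_rows finite_subset by blast
    qed
    have h4: "finite {w. strip_E k v w}" for v
    proof -
      have "{w. strip_E k v w} \<subseteq> {w \<in> strip_V k. fst w < fst v + 2}"
        by (auto simp: strip_E_def)
      then show ?thesis using finite_rows finite_subset by blast
    qed
    have "(\<lambda>n. (n + 1, 1)) ` UNIV \<subseteq> strip_V k" using assms by (auto simp: strip_V_def)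
    moreover have "infinite ((\<lambda>n. (n + 1, 1::nat)) ` (UNIV::nat set))"
      using finite_imageD[of "\<lambda>n. (n + 1, 1::nat)" "UNIV::nat set"] by (auto simp: inj_on_def)
    ultimately have h5: "infinite (strip_V k)" using finite_subset by blast
    show ?thesis unfolding infinite_biosphere_def using h1 h2 h3 h4 h5 by blast
  qed
  show "{T. maximal_set (strip_V k) (strip_E k) T} = S ` {1..k}"
  proof
    show "{T. maximal_set (strip_V k) (strip_E k) T} \<subseteq> S ` {1..k}"
    proof
      fix T assume "T \<in> {T. maximal_set (strip_V k) (strip_E k) T}"
      then obtain l where "l \<in> {1..k}" "T = C k (1, l)" using max_is_C by blast
      then show "T \<in> S ` {1..k}" using SC by blast
    qed
    show "S ` {1..k} \<subseteq> {T. maximal_set (strip_V k) (strip_E k) T}"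
      using max_C SC by auto
  qed
  have "inj_on S {1..k}"
  proof
    fix l m assume "l \<in> {1..k}" "m \<in> {1..k}" "S l = S m"
    then have "(1, l) \<in> C k (1, m)" using SC by (auto simp: C_def)
    then show "l = m" using desc_V[of "(1,l)" k "(1,m)"] by (auto simp: C_def)
  qed
  then show "card (S ` {1..k}) = k" by (simp add: card_image)
  show "\<forall>l \<in> {1..k}. \<forall>m \<in> {1..k}. sim (strip_E k) (S l) (S m)"
  proof (intro ballI)
    fix l m assume l: "l \<in> {1..k}" and m: "m \<in> {1..k}"
    have sub: "C k (1, a) - C k (1, b) \<subseteq> {w \<in> strip_V k. fst w < 1 + k}"
      if "a \<in> {1..k}" "b \<in> {1..k}" for a b
    proof
      fix w assume w: "w \<in> C k (1, a) - C k (1, b)"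
      then have wV: "w \<in> strip_V k" using C_sub[OF VS[OF that(1)]] by blast
      have "fst w < 1 + k"
      proof (rule ccontr)
        assume "\<not> fst w < 1 + k"
        then have "w \<in> desc (strip_E k) (1, b)" using far[OF VS[OF that(2)] wV] by simp
        then show False using w unfolding C_def by blast
      qed
      then show "w \<in> {w \<in> strip_V k. fst w < 1 + k}" using wV by blast
    qed
    show "sim (strip_E k) (S l) (S m)"
      unfolding sim_def SC gen_C[OF VS[OF l]] gen_C[OF VS[OF m]]
      using inf_C[OF VS[OF l]] inf_C[OF VS[OF m]] sub[OF l m] sub[OF m l]
        finite_rows[of k "1 + k"] finite_subset by blast
  qed
qed

end
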